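(* Let $G=(V,E)$ be a finite simple undirected graph, $\Gamma$ a subgroup of $\mathrm{Aut}(G)$, and $(G,\mathcal{C})$ the colored graph whose coloring is given by the $\Gamma$-orbits. Fix any ordering $(V_{\eta_1},\dots,V_{\eta_r})$ of the vertex color classes and let $m$ be the $2$-path function with respect to this ordering. (i) For every $\{v,w\}\in\tilde E$ and $\sigma\in\Gamma$, $m_{v\to w}=m_{\sigma(v)\to\sigma(w)}$. (ii) If $\Gamma$ is generously transitive or cyclic, then for all $v,w\in V$ with $c(v)=c(w)$ one has $m_{v\to w}(k,h)=m_{w\to v}(k,h)$ for all $k,h\in F$.
   Context: $\mathrm{Aut}(G)$ is the group of permutations $\sigma$ of $V$ with $\sigma(v)\sim\sigma(w)\iff v\sim w$. The extended edge set is $\tilde E=E\cup\{\{v\}:v\in V\}$, on which $\Gamma$ acts by $\sigma\cdot\{v,w\}=\{\sigma(v),\sigma(w)\}$. The orbit coloring: the vertex color classes $V_1,\dots,V_r$ are the $\Gamma$-orbits on $V$ (equivalently, loop orbits), and the edge color classes are the $\Gamma$-orbits on $E$; $c(v,w)$ denotes the color (orbit label) of $\{v,w\}\in\tilde E$, with loop $\{v\}$ colored by the index $i$ of the orbit $V_i\ni v$, and $c(v)=c(v,v)$. For the ordering, $\pi(v)=i$ iff $v\in V_{\eta_i}$ and $V_{\le i}=V_{\eta_1}\cup\dots\cup V_{\eta_i}$; $m_{v\to w}(k,h)=|\{u\in V_{\le\min(\pi(v),\pi(w))}: c(v,u)=k,\ c(u,w)=h\}|$ for $\{v,w\}\in\tilde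 E$. $F_i=\{c(v,w):\{v,w\}\in\tilde E,\ c(v)=c(w)=i\}$ and $F=\bigcup_iF_i$. $\Gamma$ is generously transitive if for every orbit $V_i$ and distinct $a,b\in V_i$ there is $\sigma\in\Gamma$ with $\sigma(a)=b$ and $\sigma(b)=a$. *)

theory Defs
  imports Main
begin

definition simple_graph :: "'a set \<Rightarrow> ('a \<Rightarrow> 'a \<Rightarrow> bool) \<Rightarrow> bool" where
  "simple_graph V E \<longleftrightarrow> finite V \<and> (\<forall>v w. E v w \<longrightarrow> v \<in> V \<and> w \<in> V)
     \<and> (\<forall>v w. E v w \<longrightarrow> E w v) \<and> (\<forall>v. \<not> E v v)"

definition perm_of :: "'a set \<Rightarrow> ('a \<Rightarrow> 'a) \<Rightarrow> bool" where
  "perm_of V \<sigma> \<longleftrightarrow> bij_betw \<sigma> V V \<and> (\<forall>x. x \<notin> V \<longrightarrow> \<sigma> x = x)"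

definition graph_aut :: "'a set \<Rightarrow> ('a \<Rightarrow> 'a \<Rightarrow> bool) \<Rightarrow> ('a \<Rightarrow> 'a) set" where
  "graph_aut V E = {\<sigma>. perm_of V \<sigma> \<and> (\<forall>v\<in>V. \<forall>w\<in>V. E (\<sigma> v) (\<sigma> w) \<longleftrightarrow> E v w)}"

definition aut_subgroup :: "'a set \<Rightarrow> ('a \<Rightarrow> 'a \<Rightarrow> bool) \<Rightarrow> ('a \<Rightarrow> 'a) set \<Rightarrow> bool" where
  "aut_subgroup V E \<Gamma> \<longleftrightarrow> \<Gamma> \<subseteq> graph_aut V E \<and> id \<in> \<Gamma>
     \<and> (\<forall>\<sigma>\<in>\<Gamma>. \<forall>\<tau>\<in>\<Gamma>. \<sigma> \<circ> \<tau> \<in> \<Gamma>) \<and> (\<forall>\<sigma>\<in>\<Gamma>. inv \<sigma> \<in> \<Gamma>)"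

definition generously_transitive :: "'a set \<Rightarrow> ('a \<Rightarrow> 'a) set \<Rightarrow> bool" where
  "generously_transitive V \<Gamma> \<longleftrightarrow>
     (\<forall>a\<in>V. \<forall>b\<in>V. a \<noteq> b \<longrightarrow> (\<exists>\<tau>\<in>\<Gamma>. \<tau> a = b) \<longrightarrow> (\<exists>\<sigma>\<in>\<Gamma>. \<sigma> a = b \<and> \<sigma> b = a))"

definition cyclic_group :: "('a \<Rightarrow> 'a) set \<Rightarrow> bool" where
  "cyclic_group \<Gamma> \<longleftrightarrow> (\<exists>g\<in>\<Gamma>. \<Gamma> = {g ^^ n | n. True})"

definition vorbit :: "('a \<Rightarrow> 'a) set \<Rightarrow> 'a \<Rightarrow> 'a set" where
  "vorbit \<Gamma> v = {\<sigma> v | \<sigma>. \<sigma> \<in> \<Gamma>}"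

definition vertex_classes :: "'a set \<Rightarrow> ('a \<Rightarrow> 'a) set \<Rightarrow> 'a set set" where
  "vertex_classes V \<Gamma> = vorbit \<Gamma> ` V"

definition ext_edge :: "'a set \<Rightarrow> ('a \<Rightarrow> 'a \<Rightarrow> bool) \<Rightarrow> 'a \<Rightarrow> 'a \<Rightarrow> bool" where
  "ext_edge V E v w \<longleftrightarrow> v \<in> V \<and> w \<in> V \<and> (v = w \<or> E v w)"

text \<open>Orbit coloring: the color of {v,w} in the extended edge set is its \<Gamma>-orbit
(a label; loops {v} are labelled by the orbit of {v}, in bijection with the vertex
orbit of v).\<close>
definition color :: "'a set \<Rightarrow> ('a \<Rightarrow> 'a \<Rightarrow> bool) \<Rightarrow> ('a \<Rightarrow> 'a) set \<Rightarrow> 'a \<Rightarrow> 'a \<Rightarrow> 'a set set option" where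
  "color V E \<Gamma> v w = (if ext_edge V E v w then Some {\<sigma> ` {v, w} | \<sigma>. \<sigma> \<in> \<Gamma>} else None)"

text \<open>Ordering of the vertex classes as a list ord (0-based): pi v = i iff v in ord!i.\<close>
definition ord_pos :: "'a set list \<Rightarrow> 'a \<Rightarrow> nat" where
  "ord_pos ord v = (THE i. i < length ord \<and> v \<in> ord ! i)"

definition ord_le :: "'a set list \<Rightarrow> nat \<Rightarrow> 'a set" where
  "ord_le ord i = (\<Union>j\<in>{j. j \<le> i \<and> j < length ord}. ord ! j)"

definition two_path :: "'a set \<Rightarrow> ('a \<Rightarrow> 'a \<Rightarrow> bool) \<Rightarrow> ('a \<Rightarrow> 'a) set \<Rightarrow> 'a set list
    \<Rightarrow> 'a \<Rightarrow> 'a \<Rightarrow> 'a set set \<Rightarrow> 'a set set \<Rightarrow> nat" where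
  "two_path V E \<Gamma> ord v w k h =
     card {u \<in> ord_le ord (min (ord_pos ord v) (ord_pos ord w)).
            color V E \<Gamma> v u = Some k \<and> color V E \<Gamma> u w = Some h}"

text \<open>F: colors of extended edges whose endpoints lie in the same vertex class.\<close>
definition same_class_colors :: "'a set \<Rightarrow> ('a \<Rightarrow> 'a \<Rightarrow> bool) \<Rightarrow> ('a \<Rightarrow> 'a) set \<Rightarrow> 'a set set set" where
  "same_class_colors V E \<Gamma> = {k. \<exists>v w. ext_edge V E v w
       \<and> color V E \<Gamma> v v = color V E \<Gamma> w w \<and> color V E \<Gamma> v w = Some k}"

end

theory Submission
  imports Defs
begin

lemma perm_bij: "perm_of V \<sigma> \<Longrightarrow> bij \<sigma>"
proof -
  assume p: "perm_of V \<sigma>"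
  hence b: "bij_betw \<sigma> V V" and o: "\<And>x. x \<notin> V \<Longrightarrow> \<sigma> x = x" by (auto simp: perm_of_def)
  have inj: "inj \<sigma>"
  proof (rule injI)
    fix x y assume e: "\<sigma> x = \<sigma> y"
    show "x = y"
    proof (cases "x \<in> V"; cases "y \<in> V")
      assume "x \<in> V" "y \<in> V" thus ?thesis using b e by (auto simp: bij_betw_def inj_on_def)
    next
      assume "x \<in> V" "y \<notin> V" thus ?thesis using b e o by (metis bij_betwE)
    next
      assume "x \<notin> V" "y \<in> V" thus ?thesis using b e o by (metis bij_betwE)
    next
      assume "x \<notin> V" "y \<notin> V" thus ?thesis using e o by auto
    qed
  qed
  have "surj \<sigma>"
  proof -
    { fix y have "y \<in> range \<sigma>"
      proof (cases "y \<in> V")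
        case True thus ?thesis using b by (metis bij_betw_imp_surj_on imageE rangeI)
      next
        case False thus ?thesis using o by (metis rangeI)
      qed }
    thus ?thesis by auto
  qed
  thus ?thesis using inj by (simp add: bij_def)
qed

context
  fixes V :: "'a set" and E :: "'a \<Rightarrow> 'a \<Rightarrow> bool" and \<Gamma> :: "('a \<Rightarrow> 'a) set"
  assumes G: "simple_graph V E" and sub: "aut_subgroup V E \<Gamma>"
begin

lemma g_perm: "\<sigma> \<in> \<Gamma> \<Longrightarrow> perm_of V \<sigma>"
  using sub by (auto simp: aut_subgroup_def graph_aut_def)

lemma g_bij: "\<sigma> \<in> \<Gamma> \<Longrightarrow> bij \<sigma>"
  using g_perm perm_bij by blast

lemma g_V: "\<sigma> \<in> \<Gamma> \<Longrightarrow> \<sigma> x \<in> V \<longleftrightarrow> x \<in> V"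
  using g_perm[of \<sigma>] unfolding perm_of_def by (metis bij_betwE)

lemma g_E: "\<sigma> \<in> \<Gamma> \<Longrightarrow> E (\<sigma> x) (\<sigma> y) \<longleftrightarrow> E x y"
proof -
  assume s: "\<sigma> \<in> \<Gamma>"
  have aut: "\<forall>v\<in>V. \<forall>w\<in>V. E (\<sigma> v) (\<sigma> w) \<longleftrightarrow> E v w" using s sub by (auto simp: aut_subgroup_def graph_aut_def)
  have EV: "\<And>a b. E a b \<Longrightarrow> a \<in> V \<and> b \<in> V" using G by (auto simp: simple_graph_def)
  show ?thesis
    using aut EV g_V[OF s] by metis
qed

lemma g_inv: "\<sigma> \<in> \<Gamma> \<Longrightarrow> inv \<sigma> \<in> \<Gamma>" using sub by (auto simp: aut_subgroup_def)
lemma g_comp: "\<sigma> \<in> \<Gamma> \<Longrightarrow> \<tau> \<in> \<Gamma> \<Longrightarrow> \<sigma> \<circ> \<tau> \<in> \<Gamma>" using sub by (auto simp: aut_subgroup_def)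
lemma g_id: "id \<in> \<Gamma>" using sub by (auto simp: aut_subgroup_def)

lemma g_invl: "\<sigma> \<in> \<Gamma> \<Longrightarrow> inv \<sigma> (\<sigma> x) = x"
  using g_bij bij_is_inj inv_f_f by metis
lemma g_invr: "\<sigma> \<in> \<Gamma> \<Longrightarrow> \<sigma> (inv \<sigma> x) = x"
  using g_bij bij_is_surj surj_f_inv_f by metis

lemma ext_inv: "\<sigma> \<in> \<Gamma> \<Longrightarrow> ext_edge V E (\<sigma> x) (\<sigma> y) \<longleftrightarrow> ext_edge V E x y"
  unfolding ext_edge_def using g_V g_E g_bij[THEN bij_is_inj] by (metis injD)

lemma color_inv: "\<sigma> \<in> \<Gamma> \<Longrightarrow> color V E \<Gamma> (\<sigma> x) (\<sigma> y) = color V E \<Gamma> x y"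
proof -
  assume s: "\<sigma> \<in> \<Gamma>"
  have "{\<rho> ` {\<sigma> x, \<sigma> y} | \<rho>. \<rho> \<in> \<Gamma>} = {\<rho> ` {x, y} | \<rho>. \<rho> \<in> \<Gamma>}"
  proof (intro equalityI subsetI)
    fix S assume "S \<in> {\<rho> ` {\<sigma> x, \<sigma> y} | \<rho>. \<rho> \<in> \<Gamma>}"
    then obtain \<rho> where r: "\<rho> \<in> \<Gamma>" "S = \<rho> ` {\<sigma> x, \<sigma> y}" by auto
    hence "S = (\<rho> \<circ> \<sigma>) ` {x, y}" by auto
    thus "S \<in> {\<rho> ` {x, y} | \<rho>. \<rho> \<in> \<Gamma>}" using g_comp[OF r(1) s] by blast
  next
    fix S assume "S \<in> {\<rho> ` {x, y} | \<rho>. \<rho> \<in> \<Gamma>}"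
    then obtain \<rho> where r: "\<rho> \<in> \<Gamma>" "S = \<rho> ` {x, y}" by auto
    hence "S = (\<rho> \<circ> inv \<sigma>) ` {\<sigma> x, \<sigma> y}" using g_invl[OF s] by auto
    thus "S \<in> {\<rho> ` {\<sigma> x, \<sigma> y} | \<rho>. \<rho> \<in> \<Gamma>}" using g_comp[OF r(1) g_inv[OF s]] by blast
  qed
  thus ?thesis unfolding color_def using ext_inv[OF s] by simp
qed

lemma color_sym: "color V E \<Gamma> x y = color V E \<Gamma> y x"
  unfolding color_def ext_edge_def using G by (auto simp: simple_graph_def insert_commute)

lemma orbit_inv: "\<sigma> \<in> \<Gamma> \<Longrightarrow> C \<in> vertex_classes V \<Gamma> \<Longrightarrow> \<sigma> x \<in> C \<longleftrightarrow> x \<in> C"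
proof -
  assume s: "\<sigma> \<in> \<Gamma>" and C: "C \<in> vertex_classes V \<Gamma>"
  then obtain v where C: "C = vorbit \<Gamma> v" by (auto simp: vertex_classes_def)
  show ?thesis
  proof
    assume "\<sigma> x \<in> C"
    then obtain \<rho> where r: "\<rho> \<in> \<Gamma>" "\<sigma> x = \<rho> v" using C by (auto simp: vorbit_def)
    hence "x = (inv \<sigma> \<circ> \<rho>) v" using g_invl[OF s] by (metis comp_apply)
    thus "x \<in> C" using C g_comp[OF g_inv[OF s] r(1)] by (auto simp: vorbit_def)
  next
    assume "x \<in> C"
    then obtain \<rho> where r: "\<rho> \<in> \<Gamma>" "x = \<rho> v" using C by (auto simp: vorbit_def)
    hence "\<sigma> x = (\<sigma> \<circ> \<rho>) v" by simp
    thus "\<sigma> x \<in> C" using C g_comp[OF s r(1)] by (auto simp: vorbit_def)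
  qed
qed

context
  fixes ord :: "'a set list"
  assumes ord_set: "set ord = vertex_classes V \<Gamma>"
begin

lemma pos_inv: "\<sigma> \<in> \<Gamma> \<Longrightarrow> ord_pos ord (\<sigma> x) = ord_pos ord x"
  unfolding ord_pos_def using orbit_inv ord_set by (metis nth_mem)

lemma le_inv: "\<sigma> \<in> \<Gamma> \<Longrightarrow> \<sigma> x \<in> ord_le ord i \<longleftrightarrow> x \<in> ord_le ord i"
  unfolding ord_le_def using orbit_inv ord_set by (auto, metis nth_mem, metis nth_mem)

lemma le_sub: "ord_le ord i \<subseteq> V"
proof
  fix x assume "x \<in> ord_le ord i"
  then obtain j where "j < length ord" "x \<in> ord ! j" by (auto simp: ord_le_def)
  hence "x \<in> \<Union>(vertex_classes V \<Gamma>)" using ord_set by (metis UnionI nth_mem)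
  then obtain v \<rho> where "v \<in> V" "\<rho> \<in> \<Gamma>" "x = \<rho> v" by (auto simp: vertex_classes_def vorbit_def)
  thus "x \<in> V" using g_V by blast
qed

lemma tp_inv: "\<sigma> \<in> \<Gamma> \<Longrightarrow> two_path V E \<Gamma> ord v w k h = two_path V E \<Gamma> ord (\<sigma> v) (\<sigma> w) k h"
proof -
  assume s: "\<sigma> \<in> \<Gamma>"
  let ?L = "ord_le ord (min (ord_pos ord v) (ord_pos ord w))"
  let ?S = "{u \<in> ?L. color V E \<Gamma> v u = Some k \<and> color V E \<Gamma> u w = Some h}"
  let ?S' = "{u \<in> ?L. color V E \<Gamma> (\<sigma> v) u = Some k \<and> color V E \<Gamma> u (\<sigma> w) = Some h}"
  have "\<sigma> ` ?S = ?S'"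
  proof (intro equalityI subsetI)
    fix x assume "x \<in> \<sigma> ` ?S" thus "x \<in> ?S'" using le_inv[OF s] color_inv[OF s] by auto
  next
    fix x assume x: "x \<in> ?S'"
    have "x = \<sigma> (inv \<sigma> x)" using g_invr[OF s] by simp
    moreover have "inv \<sigma> x \<in> ?S" using x le_inv[OF s, of "inv \<sigma> x"] color_inv[OF s, of v "inv \<sigma> x"]
      color_inv[OF s, of "inv \<sigma> x" w] g_invr[OF s] by auto
    ultimately show "x \<in> \<sigma> ` ?S" by blast
  qed
  moreover have "inj_on \<sigma> ?S" using inj_on_subset[OF bij_is_inj[OF g_bij[OF s]]] by blast
  ultimately have "card ?S = card ?S'" using card_image by fastforce
  moreover have "ord_pos ord (\<sigma> v) = ord_pos ord v" "ord_pos ord (\<sigma> w) = ord_pos ord w"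
    using pos_inv[OF s] by auto
  ultimately show ?thesis unfolding two_path_def by simp
qed

end

lemma same_orbit: "v \<in> V \<Longrightarrow> color V E \<Gamma> v v = color V E \<Gamma> w w \<Longrightarrow> \<exists>\<sigma>\<in>\<Gamma>. w = \<sigma> v"
proof -
  assume v: "v \<in> V" and c: "color V E \<Gamma> v v = color V E \<Gamma> w w"
  have ev: "ext_edge V E v v" using v by (simp add: ext_edge_def)
  hence ew: "ext_edge V E w w" using c unfolding color_def by (auto split: if_splits)
  have "{\<rho> ` {w, w} | \<rho>. \<rho> \<in> \<Gamma>} = {\<rho> ` {v, v} | \<rho>. \<rho> \<in> \<Gamma>}"
    using c ev ew unfolding color_def by simp
  moreover have "{w} \<in> {\<rho> ` {w, w} | \<rho>. \<rho> \<in> \<Gamma>}" proof -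
    have "{w} = id ` {w, w}" by simp
    thus ?thesis using g_id by blast
  qed
  ultimately obtain \<rho> where "\<rho> \<in> \<Gamma>" "{w} = \<rho> ` {v, v}" by auto
  thus ?thesis by auto
qed

lemma F_orbit: "k \<in> same_class_colors V E \<Gamma> \<Longrightarrow> color V E \<Gamma> v u = Some k \<Longrightarrow> \<exists>\<rho>\<in>\<Gamma>. u = \<rho> v"
proof -
  assume k: "k \<in> same_class_colors V E \<Gamma>" and cu: "color V E \<Gamma> v u = Some k"
  then obtain a b where ab: "ext_edge V E a b" "color V E \<Gamma> a a = color V E \<Gamma> b b" "color V E \<Gamma> a b = Some k"
    by (auto simp: same_class_colors_def)
  have aV: "a \<in> V" using ab(1) by (simp add: ext_edge_def)
  obtain \<beta> where \<beta>: "\<beta> \<in> \<Gamma>" "b = \<beta> a" using same_orbit[OF aV ab(2)] by blast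
  have kab: "k = {\<sigma> ` {a, b} | \<sigma>. \<sigma> \<in> \<Gamma>}" using ab(1,3) by (simp add: color_def)
  have evu: "ext_edge V E v u" using cu by (auto simp: color_def split: if_splits)
  hence kvu: "k = {\<sigma> ` {v, u} | \<sigma>. \<sigma> \<in> \<Gamma>}" using cu by (simp add: color_def)
  have "{v, u} = id ` {v, u}" by simp
  hence "{v, u} \<in> k" using kvu g_id by blast
  then obtain \<sigma> where \<sigma>: "\<sigma> \<in> \<Gamma>" "{v, u} = \<sigma> ` {a, b}" using kab by auto
  have orb: "\<And>x. x \<in> {v, u} \<Longrightarrow> \<exists>\<alpha>\<in>\<Gamma>. x = \<alpha> a"
  proof -
    fix x assume "x \<in> {v, u}"
    hence "x = \<sigma> a \<or> x = (\<sigma> \<circ> \<beta>) a" using \<sigma>(2) \<beta>(2) by auto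
    thus "\<exists>\<alpha>\<in>\<Gamma>. x = \<alpha> a" using \<sigma>(1) g_comp[OF \<sigma>(1) \<beta>(1)] by blast
  qed
  obtain \<alpha>1 where a1: "\<alpha>1 \<in> \<Gamma>" "v = \<alpha>1 a" using orb by blast
  obtain \<alpha>2 where a2: "\<alpha>2 \<in> \<Gamma>" "u = \<alpha>2 a" using orb by blast
  have "u = (\<alpha>2 \<circ> inv \<alpha>1) v" using a1 a2 g_invl by simp
  thus ?thesis using g_comp[OF a2(1) g_inv[OF a1(1)]] by blast
qed

context
  fixes ord :: "'a set list"
  assumes ord_set: "set ord = vertex_classes V \<Gamma>"
begin

lemma cyc_le:
  assumes comm: "\<And>\<rho> \<tau>. \<rho> \<in> \<Gamma> \<Longrightarrow> \<tau> \<in> \<Gamma> \<Longrightarrow> \<rho> \<circ> \<tau> = \<tau> \<circ> \<rho>"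
    and t: "\<tau> \<in> \<Gamma>" and k: "k \<in> same_class_colors V E \<Gamma>"
  shows "card {u \<in> ord_le ord i. color V E \<Gamma> v u = Some k \<and> color V E \<Gamma> u (\<tau> v) = Some h}
    \<le> card {u \<in> ord_le ord i. color V E \<Gamma> (\<tau> v) u = Some k \<and> color V E \<Gamma> u v = Some h}"
    (is "card ?S1 \<le> card ?S2")
proof -
  define r where "r u = (SOME \<rho>. \<rho> \<in> \<Gamma> \<and> u = \<rho> v)" for u
  define f where "f u = \<tau> (inv (r u) v)" for u
  have r: "r u \<in> \<Gamma> \<and> u = r u v" if "u \<in> ?S1" for u
  proof -
    have "\<exists>\<rho>. \<rho> \<in> \<Gamma> \<and> u = \<rho> v" using F_orbit[OF k] that by blast
    thus ?thesis unfolding r_def by (rule someI_ex)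
  qed
  have comm': "\<rho> (\<tau>' x) = \<tau>' (\<rho> x)" if "\<rho> \<in> \<Gamma>" "\<tau>' \<in> \<Gamma>" for \<rho> \<tau>' x
    using fun_cong[OF comm[OF that], of x] by simp
  have fS: "f u \<in> ?S2" if u: "u \<in> ?S1" for u
  proof -
    obtain \<rho> where \<rho>: "\<rho> \<in> \<Gamma>" "u = \<rho> v" and ru: "r u = \<rho>" using r[OF u] by blast
    have fdef: "f u = \<tau> (inv \<rho> v)" using ru f_def by simp
    have iv: "inv \<rho> u = v" using \<rho>(2) g_invl[OF \<rho>(1)] by simp
    have fu: "f u = \<tau> (inv \<rho> (inv \<rho> u))" using iv fdef by simp
    have L: "f u \<in> ord_le ord i" unfolding fu
      using le_inv[OF ord_set t] le_inv[OF ord_set g_inv[OF \<rho>(1)]] u by auto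
    have "color V E \<Gamma> (\<tau> v) (f u) = color V E \<Gamma> v (inv \<rho> v)"
      unfolding fdef using color_inv[OF t] by simp
    also have "\<dots> = color V E \<Gamma> (\<rho> v) (\<rho> (inv \<rho> v))" using color_inv[OF \<rho>(1)] by simp
    also have "\<dots> = color V E \<Gamma> u v" using \<rho>(2) g_invr[OF \<rho>(1)] by simp
    also have "\<dots> = Some k" using u color_sym[of u v] by auto
    finally have c1: "color V E \<Gamma> (\<tau> v) (f u) = Some k" .
    have "color V E \<Gamma> (f u) v = color V E \<Gamma> (\<rho> (\<tau> (inv \<rho> v))) (\<rho> v)"
      unfolding fdef using color_inv[OF \<rho>(1)] by simp
    also have "\<dots> = color V E \<Gamma> (\<tau> (\<rho> (inv \<rho> v))) u" using comm'[OF \<rho>(1) t, of "inv \<rho> v"] \<rho>(2) by (simp only:)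
    also have "\<dots> = color V E \<Gamma> (\<tau> v) u" using g_invr[OF \<rho>(1)] by simp
    also have "\<dots> = Some h" using u color_sym[of u "\<tau> v"] by auto
    finally have c2: "color V E \<Gamma> (f u) v = Some h" .
    show ?thesis using L c1 c2 by simp
  qed
  have inj: "inj_on f ?S1"
  proof (rule inj_onI)
    fix u1 u2 assume u1: "u1 \<in> ?S1" and u2: "u2 \<in> ?S1" and e: "f u1 = f u2"
    obtain r1 where r1: "r1 \<in> \<Gamma>" "u1 = r1 v" and ru1: "r u1 = r1" using r[OF u1] by blast
    obtain r2 where r2: "r2 \<in> \<Gamma>" "u2 = r2 v" and ru2: "r u2 = r2" using r[OF u2] by blast
    have "\<tau> (inv r1 v) = \<tau> (inv r2 v)" using e ru1 ru2 f_def by simp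
    hence "inv \<tau> (\<tau> (inv r1 v)) = inv \<tau> (\<tau> (inv r2 v))" by simp
    hence e': "inv r1 v = inv r2 v" using g_invl[OF t] by simp
    have "u2 = r2 (r1 (inv r1 v))" using r2 g_invr[OF r1(1)] by simp
    also have "\<dots> = r1 (r2 (inv r2 v))" using comm'[OF r2(1) r1(1), of "inv r1 v"] e' by (simp only:)
    also have "\<dots> = u1" using r1 g_invr[OF r2(1)] by simp
    finally show "u1 = u2" by simp
  qed
  have sub2: "?S2 \<subseteq> V" using le_sub[OF ord_set] by blast
  have fV: "finite V" using G by (simp add: simple_graph_def)
  have fin: "finite ?S2" using finite_subset[OF sub2 fV] .
  have img: "f ` ?S1 \<subseteq> ?S2" using fS by blast
  show ?thesis by (rule card_inj_on_le[OF inj img fin])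
qed

end
end
theorem lemma3p10:
  fixes V :: "'a set" and E :: "'a \<Rightarrow> 'a \<Rightarrow> bool" and \<Gamma> :: "('a \<Rightarrow> 'a) set"
    and ord :: "'a set list"
  assumes G: "simple_graph V E"
    and sub: "aut_subgroup V E \<Gamma>"
    and ord_dist: "distinct ord"
    and ord_set: "set ord = vertex_classes V \<Gamma>"
  shows "(\<forall>v w \<sigma>. ext_edge V E v w \<longrightarrow> \<sigma> \<in> \<Gamma> \<longrightarrow>
            (\<forall>k h. two_path V E \<Gamma> ord v w k h = two_path V E \<Gamma> ord (\<sigma> v) (\<sigma> w) k h))
       \<and> ((generously_transitive V \<Gamma> \<or> cyclic_group \<Gamma>) \<longrightarrow>
            (\<forall>v\<in>V. \<forall>w\<in>V. color V E \<Gamma> v v = color V E \<Gamma> w w \<longrightarrow>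
               (\<forall>k\<in>same_class_colors V E \<Gamma>. \<forall>h\<in>same_class_colors V E \<Gamma>.
                  two_path V E \<Gamma> ord v w k h = two_path V E \<Gamma> ord w v k h)))"
proof (intro conjI allI impI ballI)
  fix v w \<sigma> k h assume "ext_edge V E v w" "\<sigma> \<in> \<Gamma>"
  thus "two_path V E \<Gamma> ord v w k h = two_path V E \<Gamma> ord (\<sigma> v) (\<sigma> w) k h"
    using tp_inv[OF G sub ord_set] by blast
next
  fix v w k h
  assume gc: "generously_transitive V \<Gamma> \<or> cyclic_group \<Gamma>" and v: "v \<in> V" and w: "w \<in> V"
    and c: "color V E \<Gamma> v v = color V E \<Gamma> w w"
    and k: "k \<in> same_class_colors V E \<Gamma>" and h: "h \<in> same_class_colors V E \<Gamma>"
  obtain \<tau> where t: "\<tau> \<in> \<Gamma>" "w = \<tau> v" using same_orbit[OF G sub v c] by blast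
  show "two_path V E \<Gamma> ord v w k h = two_path V E \<Gamma> ord w v k h"
  proof (cases "generously_transitive V \<Gamma>")
    case True
    show ?thesis
    proof (cases "v = w")
      case False
      then obtain \<sigma> where s: "\<sigma> \<in> \<Gamma>" "\<sigma> v = w" "\<sigma> w = v"
        using True v w t unfolding generously_transitive_def by metis
      show ?thesis using tp_inv[OF G sub ord_set s(1), of v w k h] s by simp
    qed simp
  next
    case False
    hence "cyclic_group \<Gamma>" using gc by blast
    then obtain g where g: "\<Gamma> = {g ^^ n | n. True}" unfolding cyclic_group_def by blast
    have comm: "\<rho> \<circ> \<tau>' = \<tau>' \<circ> \<rho>" if rt: "\<rho> \<in> \<Gamma>" "\<tau>' \<in> \<Gamma>" for \<rho> \<tau>'
    proof -
      obtain m n where "\<rho> = g ^^ m" "\<tau>' = g ^^ n" using rt g by blast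
      thus ?thesis by (metis funpow_add add.commute)
    qed
    have pw: "ord_pos ord w = ord_pos ord v" using pos_inv[OF G sub ord_set t(1)] t(2) by simp
    define i where "i = min (ord_pos ord v) (ord_pos ord w)"
    have i2: "min (ord_pos ord w) (ord_pos ord v) = i" unfolding i_def by simp
    have vw: "v = inv \<tau> w" using t g_invl[OF G sub t(1)] by simp
    have le1: "two_path V E \<Gamma> ord v w k h \<le> two_path V E \<Gamma> ord w v k h"
      unfolding two_path_def i2 i_def[symmetric]
      using cyc_le[OF G sub ord_set comm t(1) k, of i v h] t(2) by simp
    have le2: "two_path V E \<Gamma> ord w v k h \<le> two_path V E \<Gamma> ord v w k h"
      unfolding two_path_def i2 i_def[symmetric]
      using cyc_le[OF G sub ord_set comm g_inv[OF G sub t(1)] k, of i w h] vw by simp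
    show ?thesis using le1 le2 by simp
  qed
qed

end
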